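(* Let $\boldsymbol{\mu}=(\mu_1,\mu_2)\in\Lambda$ with $\mu_1>\mu_2$ and $\mu_1+\mu_2\ge1$. Then for every $\delta$ with $0<\delta\le\min\{x^\star(\boldsymbol{\mu}),1-x^\star(\boldsymbol{\mu})\}$, $$g(x^\star(\boldsymbol{\mu})-\delta,\boldsymbol{\mu})\ge g(x^\star(\boldsymbol{\mu})+\delta,\boldsymbol{\mu}).$$
   Context: $\Lambda=\{\boldsymbol{\mu}\in(0,1)^2:\mu_1\neq\mu_2\}$ (means of a two-armed Bernoulli bandit). For $p,q\in(0,1)$ let $d(p,q)$ be the Bernoulli Kullback–Leibler divergence. For $x\in[0,1]$, $g(x,\boldsymbol{\mu})=\inf_{\lambda\in(0,1)}\big[(1-x)d(\lambda,\mu_1)+x\,d(\lambda,\mu_2)\big]=-\log\big((1-\mu_1)^{1-x}(1-\mu_2)^x+\mu_1^{1-x}\mu_2^x\big)$, and $x^\star(\boldsymbol{\mu})=\arg\max_{x\in(0,1)}g(x,\boldsymbol{\mu})$. *)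

theory Defs
  imports "HOL-Analysis.Analysis"
begin

definition kl_bern :: "real \<Rightarrow> real \<Rightarrow> real" where
  "kl_bern p q = p * ln (p / q) + (1 - p) * ln ((1 - p) / (1 - q))"

definition Lambda :: "(real \<times> real) set" where
  "Lambda = {mu. 0 < fst mu \<and> fst mu < 1 \<and> 0 < snd mu \<and> snd mu < 1 \<and> fst mu \<noteq> snd mu}"

definition gfun :: "real \<Rightarrow> real \<times> real \<Rightarrow> real" where
  "gfun x mu = (INF lam \<in> {0<..<1}. (1 - x) * kl_bern lam (fst mu) + x * kl_bern lam (snd mu))"

definition xstar :: "real \<times> real \<Rightarrow> real" where
  "xstar mu = (THE x. x \<in> {0<..<1} \<and> (\<forall>y \<in> {0<..<1}. gfun y mu \<le> gfun x mu))"

end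

theory Submission imports Defs begin

lemma exp_strict: fixes u :: real assumes "u \<noteq> 0" shows "1 + u < exp u"
proof (cases "u < -2")
  case True then show ?thesis using exp_gt_zero[of u] by linarith
next
  case False
  have e: "exp u = exp (u/2) * exp (u/2)" by (simp add: exp_add[symmetric])
  have h: "1 + u/2 \<le> exp (u/2)" using exp_ge_add_one_self[of "u/2"] by simp
  have "(1 + u/2) * (1 + u/2) \<le> exp (u/2) * exp (u/2)"
    using False h by (intro mult_mono) auto
  moreover have "1 + u < (1 + u/2) * (1 + u/2)" proof -
    have "0 < u*u" using assms by (auto simp: zero_less_mult_iff linorder_neq_iff)
    thus ?thesis by (simp add: algebra_simps)
  qed
  ultimately show ?thesis using e by linarith
qed

lemma ln_strict: fixes y :: real assumes "0 < y" "y \<noteq> 1" shows "ln y < y - 1"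
proof -
  have "ln y \<noteq> 0" using assms by simp
  from exp_strict[OF this] show ?thesis using assms by simp
qed

lemma sdiff_scale:
  fixes lm v :: real assumes "0 \<le> lm" "lm \<le> 1" "0 \<le> v"
  shows "exp (lm * v) - exp (-(lm * v)) \<le> lm * (exp v - exp (-v))"
proof -
  have cv: "convex_on {0..} (\<lambda>u::real. exp u - exp (-u))"
  proof (rule f''_ge0_imp_convex[where f' = "\<lambda>u. exp u + exp (-u)" and f'' = "\<lambda>u. exp u - exp (-u)"])
    show "convex {0::real..}" by simp
    fix x :: real
    show "((\<lambda>u. exp u - exp (-u)) has_real_derivative exp x + exp (- x)) (at x)"
      by (auto intro!: derivative_eq_intros)
    show "((\<lambda>u. exp u + exp (-u)) has_real_derivative exp x - exp (- x)) (at x)"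
      by (auto intro!: derivative_eq_intros)
    assume "x \<in> {0..}" then show "0 \<le> exp x - exp (-x)" by simp
  qed
  from convex_onD[OF cv, of lm 0 v] assms show ?thesis by simp
qed

lemma generic:
  fixes la lc al be :: real
  assumes al: "al > 0" and be: "be > 0"
  defines "F \<equiv> \<lambda>x. exp (la + x*al) + exp (lc - x*be)"
  defines "x0 \<equiv> (lc + ln be - la - ln al)/(al+be)"
  shows "y \<noteq> x0 \<Longrightarrow> F x0 < F y"
    and "be \<le> al \<Longrightarrow> 0 \<le> t \<Longrightarrow> F (x0 - t) \<le> F (x0 + t)"
proof -
  define A where "A = exp (la + x0*al)"
  define C where "C = exp (lc - x0*be)"
  have Fs: "F (x0 + s) = A * exp (al * s) + C * exp (-(be * s))" for s
    unfolding F_def A_def C_def by (simp add: exp_add[symmetric] algebra_simps)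
  have x0e: "x0 * (al+be) = lc + ln be - la - ln al" unfolding x0_def using al be by simp
  have "A * al = exp (la + x0*al + ln al)" unfolding A_def using al by (simp add: exp_add)
  also have "la + x0*al + ln al = lc - x0*be + ln be" using x0e by (simp add: algebra_simps)
  also have "exp (lc - x0*be + ln be) = C * be" unfolding C_def using be by (simp add: exp_add)
  finally have K: "A * al = C * be" .
  have Ap: "A > 0" "C > 0" unfolding A_def C_def by auto
  {
    assume "y \<noteq> x0"
    define s where "s = y - x0"
    have s0: "s \<noteq> 0" using \<open>y \<noteq> x0\<close> s_def by simp
    have "1 + al * s < exp (al * s)" using exp_strict s0 al by simp
    hence "A * (1 + al * s) < A * exp (al * s)" using Ap by simp
    moreover have "1 + (-(be * s)) < exp (-(be * s))" using s0 be by (intro exp_strict) simp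
    hence "C * (1 - be * s) < C * exp (-(be * s))" using Ap by simp
    moreover have "A*(al * s) = C * (be * s)" using K by (metis mult.assoc)
    ultimately have "A + C < A * exp (al * s) + C * exp (-(be * s))"
      by (simp add: algebra_simps)
    moreover have "F x0 = A + C" using Fs[of 0] by simp
    moreover have "F y = A * exp (al * s) + C * exp (-(be * s))" using Fs[of s] s_def by simp
    ultimately show "F x0 < F y" by simp
  }
  assume ba: "be \<le> al" and t: "0 \<le> t"
  have sc: "exp ((be/al)*(al * t)) - exp (-((be/al)*(al * t))) \<le> (be/al) * (exp (al * t) - exp (-(al * t)))"
    using ba t al be by (intro sdiff_scale) auto
  have "(be/al)*(al * t) = be * t" using al by simp
  with sc have sc2: "exp (be * t) - exp (-(be * t)) \<le> (be/al) * (exp (al * t) - exp (-(al * t)))" by simp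
  have "C * (exp (be * t) - exp (-(be * t))) \<le> C * ((be/al) * (exp (al * t) - exp (-(al * t))))"
    using sc2 Ap by (intro mult_left_mono) auto
  also have "C * ((be/al) * (exp (al * t) - exp (-(al * t)))) = A * (exp (al * t) - exp (-(al * t)))"
  proof -
    have "C * (be/al) = (A*al)/al" using K by (simp add: K[symmetric])
    also have "\<dots> = A" using al by simp
    finally show ?thesis by (metis mult.assoc)
  qed
  finally have m: "C * (exp (be * t) - exp (-(be * t))) \<le> A * (exp (al * t) - exp (-(al * t)))" .
  have "F (x0 - t) = A * exp (-(al * t)) + C * exp (be * t)" using Fs[of "-t"] by simp
  moreover have "F (x0 + t) = A * exp (al * t) + C * exp (-(be * t))" using Fs[of t] by simp
  ultimately show "F (x0 - t) \<le> F (x0 + t)" using m by (simp add: algebra_simps)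
qed


lemma gibbs:
  fixes p q l :: real assumes p: "p > 0" and q: "q > 0" and l: "0 < l" "l < 1"
  shows "l * ln l + (1-l) * ln (1-l) - l * ln p - (1-l) * ln q \<ge> - ln (p+q)"
proof -
  define F where "F = p + q"
  have Fp: "F > 0" using p q F_def by simp
  have e1: "ln (p/(l*F)) = ln p - ln l - ln F" using p l Fp by (simp add: ln_div ln_mult)
  have e2: "ln (q/((1-l)*F)) = ln q - ln (1-l) - ln F" using q l Fp by (simp add: ln_div ln_mult)
  have i1: "ln (p/(l*F)) \<le> p/(l*F) - 1" using p l Fp by (intro ln_le_minus_one) simp
  have i2: "ln (q/((1-l)*F)) \<le> q/((1-l)*F) - 1" using q l Fp by (intro ln_le_minus_one) simp
  have m1: "l * ln (p/(l*F)) \<le> l * (p/(l*F) - 1)" using i1 l by (intro mult_left_mono) auto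
  have m2: "(1-l) * ln (q/((1-l)*F)) \<le> (1-l) * (q/((1-l)*F) - 1)" using i2 l by (intro mult_left_mono) auto
  have s1: "l * (p/(l*F) - 1) = p/F - l" using l Fp by (simp add: field_simps)
  have s2: "(1-l) * (q/((1-l)*F) - 1) = q/F - (1-l)" using l Fp by (simp add: field_simps)
  have s3: "p/F + q/F = 1" using Fp unfolding F_def by (simp add: add_divide_distrib[symmetric])
  have "l * ln (p/(l*F)) + (1-l) * ln (q/((1-l)*F)) \<le> 0" using m1 m2 s1 s2 s3 by linarith
  then show ?thesis unfolding e1 e2 F_def[symmetric] by (simp add: algebra_simps)
qed

lemma gfun_closed:
  fixes mu1 mu2 x :: real
  assumes m: "0 < mu1" "mu1 < 1" "0 < mu2" "mu2 < 1"
  shows "gfun x (mu1, mu2) = - ln (exp ((1-x)*ln (1-mu1) + x*ln (1-mu2)) + exp ((1-x)*ln mu1 + x*ln mu2))"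
proof -
  define P where "P = exp ((1-x)*ln mu1 + x*ln mu2)"
  define Q where "Q = exp ((1-x)*ln (1-mu1) + x*ln (1-mu2))"
  have PQ: "P > 0" "Q > 0" unfolding P_def Q_def by auto
  have obj: "(1 - x) * kl_bern l mu1 + x * kl_bern l mu2
      = l * ln l + (1-l) * ln (1-l) - l * ln P - (1-l) * ln Q" if l: "0 < l" "l < 1" for l
    unfolding kl_bern_def P_def Q_def using l m by (simp add: ln_div algebra_simps)
  define l0 where "l0 = P / (Q + P)"
  have l0: "0 < l0" "l0 < 1" unfolding l0_def using PQ by auto
  have "1 - l0 = Q/(Q+P)" unfolding l0_def using PQ by (simp add: field_simps)
  have v0: "l0 * ln l0 + (1-l0) * ln (1-l0) - l0 * ln P - (1-l0) * ln Q = - ln (Q+P)"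
  proof -
    have a: "ln l0 = ln P - ln (Q+P)" unfolding l0_def using PQ by (simp add: ln_div)
    have b: "ln (1-l0) = ln Q - ln (Q+P)" using \<open>1 - l0 = Q/(Q+P)\<close> PQ by (simp add: ln_div)
    show ?thesis unfolding a b by (simp add: algebra_simps)
  qed
  show ?thesis unfolding gfun_def fst_conv snd_conv P_def[symmetric] Q_def[symmetric]
  proof (rule cInf_eq_minimum)
    show "- ln (Q + P) \<in> (\<lambda>l. (1 - x) * kl_bern l mu1 + x * kl_bern l mu2) ` {0<..<1}"
      using obj[OF l0] v0 l0 by (intro image_eqI[of _ _ l0]) auto
    fix y assume "y \<in> (\<lambda>l. (1 - x) * kl_bern l mu1 + x * kl_bern l mu2) ` {0<..<1}"
    then obtain l where l: "0 < l" "l < 1" and y: "y = (1 - x) * kl_bern l mu1 + x * kl_bern l mu2" by auto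
    show "- ln (Q + P) \<le> y" unfolding y obj[OF l] using gibbs[OF PQ(1) PQ(2) l] by (simp add: add.commute)
  qed
qed


lemma mul_ln_strict: fixes m n :: real assumes "0 < m" "0 < n" "m \<noteq> n"
  shows "m * (ln n - ln m) < n - m"
proof -
  have "ln (n/m) < n/m - 1" using assms by (intro ln_strict) auto
  hence "m * ln (n/m) < m * (n/m - 1)" using assms by simp
  thus ?thesis using assms by (simp add: ln_div right_diff_distrib)
qed

theorem mainTheorem2:
  fixes mu1 mu2 \<delta> :: real
  assumes "(mu1, mu2) \<in> Lambda"
    and "mu1 > mu2"
    and "mu1 + mu2 \<ge> 1"
    and "0 < \<delta>"
    and "\<delta> \<le> min (xstar (mu1, mu2)) (1 - xstar (mu1, mu2))"
  shows "gfun (xstar (mu1, mu2) - \<delta>) (mu1, mu2) \<ge> gfun (xstar (mu1, mu2) + \<delta>) (mu1, mu2)"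
proof -
  have m: "0 < mu1" "mu1 < 1" "0 < mu2" "mu2 < 1" using assms(1) unfolding Lambda_def by auto
  define la where "la = ln (1-mu1)"
  define lc where "lc = ln mu1"
  define al where "al = ln (1-mu2) - ln (1-mu1)"
  define be where "be = ln mu1 - ln mu2"
  define F where "F = (\<lambda>x. exp (la + x*al) + exp (lc - x*be))"
  define x0 where "x0 = (lc + ln be - la - ln al)/(al+be)"
  have al: "al > 0" unfolding al_def using m assms(2) by simp
  have be: "be > 0" unfolding be_def using m assms(2) by simp
  have G: "gfun x (mu1, mu2) = - ln (F x)" for x
  proof -
    have "(1-x)*ln (1-mu1) + x*ln (1-mu2) = la + x*al" "(1-x)*ln mu1 + x*ln mu2 = lc - x*be"
      unfolding la_def al_def lc_def be_def by (simp_all add: algebra_simps)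
    thus ?thesis unfolding gfun_closed[OF m] F_def by simp
  qed
  have Fp: "F x > 0" for x unfolding F_def by (intro add_pos_pos) auto
  have gen1: "y \<noteq> x0 \<Longrightarrow> F x0 < F y" for y unfolding F_def x0_def by (rule generic(1)[OF al be])
  have ba: "be \<le> al"
  proof -
    have "mu1 * (1-mu1) \<le> mu2 * (1-mu2)"
    proof -
      have "mu2 * (1-mu2) - mu1 * (1-mu1) = (mu1 - mu2) * (mu1 + mu2 - 1)" by (simp add: algebra_simps)
      also have "\<dots> \<ge> 0" using assms(2,3) by simp
      finally show ?thesis by simp
    qed
    hence "ln (mu1 * (1-mu1)) \<le> ln (mu2 * (1-mu2))" using m by simp
    thus ?thesis unfolding al_def be_def using m by (simp add: ln_mult)
  qed
  have gen2: "0 \<le> t \<Longrightarrow> F (x0-t) \<le> F (x0+t)" for t unfolding F_def x0_def by (rule generic(2)[OF al be ba])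
  have x0pos: "0 < x0"
  proof -
    have "mu1 * (ln mu2 - ln mu1) < mu2 - mu1" using m assms(2) by (intro mul_ln_strict) auto
    moreover have "(1-mu1) * (ln (1-mu2) - ln (1-mu1)) < (1-mu2) - (1-mu1)" using m assms(2) by (intro mul_ln_strict) auto
    ultimately have "(1-mu1) * al < mu1 * be" unfolding al_def be_def by (simp add: algebra_simps)
    moreover have "0 < (1-mu1) * al" using m al by simp
    ultimately have "ln ((1-mu1) * al) < ln (mu1 * be)" by simp
    hence "la + ln al < lc + ln be" unfolding la_def lc_def using m al be by (simp add: ln_mult)
    thus ?thesis unfolding x0_def using al be by simp
  qed
  have x0lt: "x0 < 1"
  proof -
    have "mu2 * (ln mu1 - ln mu2) < mu1 - mu2" using m assms(2) by (intro mul_ln_strict) auto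
    moreover have "(1-mu2) * (ln (1-mu1) - ln (1-mu2)) < (1-mu1) - (1-mu2)" using m assms(2) by (intro mul_ln_strict) auto
    ultimately have "mu2 * be < (1-mu2) * al" unfolding al_def be_def by (simp add: algebra_simps)
    moreover have "0 < mu2 * be" using m be by simp
    ultimately have "ln (mu2 * be) < ln ((1-mu2) * al)" by simp
    hence "ln mu2 + ln be < ln (1-mu2) + ln al" using m al be by (simp add: ln_mult)
    hence "lc + ln be - la - ln al < al + be" unfolding la_def lc_def al_def be_def by simp
    thus ?thesis unfolding x0_def using al be by simp
  qed
  have xs: "xstar (mu1, mu2) = x0"
    unfolding xstar_def
  proof (rule the_equality)
    show "x0 \<in> {0<..<1} \<and> (\<forall>y\<in>{0<..<1}. gfun y (mu1, mu2) \<le> gfun x0 (mu1, mu2))"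
    proof (intro conjI ballI)
      show "x0 \<in> {0<..<1}" using x0pos x0lt by simp
      fix y
      have "F x0 \<le> F y" using gen1[of y] by (cases "y = x0") auto
      thus "gfun y (mu1, mu2) \<le> gfun x0 (mu1, mu2)" unfolding G using Fp by simp
    qed
    fix x assume "x \<in> {0<..<1} \<and> (\<forall>y\<in>{0<..<1}. gfun y (mu1, mu2) \<le> gfun x (mu1, mu2))"
    hence "gfun x0 (mu1, mu2) \<le> gfun x (mu1, mu2)" using x0pos x0lt by auto
    hence "F x \<le> F x0" unfolding G using Fp by simp
    thus "x = x0" using gen1[of x] by fastforce
  qed
  have "F (x0 - \<delta>) \<le> F (x0 + \<delta>)" using gen2 assms(4) by simp
  thus ?thesis unfolding xs G using Fp by simp
qed

end
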